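(* Let $k\ge0$ and let $s$ be the singular factor of length $q_k$ of slope $\alpha$. Then (i) $s$ begins and ends with the same letter; (ii) $s$ is a palindrome; and (iii) the Parikh vectors of the proper prefixes and of the proper suffixes of $s$ are contained in the Parikh vector of every factor of slope $\alpha$ of length $q_k$.
   Context: $\alpha\in(0,1)$ irrational, $\alpha=[0;a_1,a_2,\ldots]$ with positive integers $a_i$, $a_1\ge2$; $q_0=1$, $q_1=a_1$, $q_k=a_kq_{k-1}+q_{k-2}$ ($k\ge2$). Identify the circle $\mathbb{T}$ with $[0,1)$, $R(\rho)=\{\rho+\alpha\}$; fix one convention, $I_0=[0,1-\alpha)$, $I_1=[1-\alpha,1)$ or $I_0=(0,1-\alpha]$, $I_1=(1-\alpha,1]$. $\mathbf{s}_{\rho,\alpha}$ has $n$-th letter $0$ if $R^n(\rho)\in I_0$ and $1$ otherwise; all such words share the set $\mathcal{L}_\alpha$ of finite factors (factors of slope $\alpha$). For $w=b_0\cdots b_{n-1}\in\mathcal{L}_\alpha$, $[w]=\bigcap_{i=0}^{n-1}R^{-i}(I_{b_i})$, so $\mathbf{s}_{\rho,\alpha}$ begins with $w$ iff $\rho\in[w]$; the intervals $[w]$ with $|w|=n$ are the $n+1$ arcs cut out by $0,\{-\alpha\},\ldots,\{-n\alpha\}$. The singular factor of length $q_k$ is the unique $s\in\mathcal{L}_\alpha$ of length $q_k$ whose interval $[s]$ has endpoints $0$ and $\{-q_k\alpha\}$. A proper prefix (suffix) of $s$ is a nonempty prefix (suffix) different from $s$. The Parikh vector of a binary word $u$ is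 $(|u|_0,|u|_1)$; $P$ is contained in $Q$ if $P\le Q$ componentwise and $P\ne Q$. *)

theory Defs
  imports Complex_Main "HOL-Library.Sublist"
begin

fun gauss_x :: "real \<Rightarrow> nat \<Rightarrow> real" where
  "gauss_x \<alpha> 0 = \<alpha>"
| "gauss_x \<alpha> (Suc n) = frac (1 / gauss_x \<alpha> n)"

definition cf_a :: "real \<Rightarrow> nat \<Rightarrow> nat" where
  "cf_a \<alpha> n = (if n = 0 then 0 else nat \<lfloor>1 / gauss_x \<alpha> (n - 1)\<rfloor>)"

fun cf_q :: "real \<Rightarrow> nat \<Rightarrow> nat" where
  "cf_q \<alpha> 0 = 1"
| "cf_q \<alpha> (Suc 0) = cf_a \<alpha> 1"
| "cf_q \<alpha> (Suc (Suc k)) = cf_a \<alpha> (Suc (Suc k)) * cf_q \<alpha> (Suc k) + cf_q \<alpha> k"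

text \<open>Rotation R(rho) = {rho + alpha} on [0,1); convention I_0 = [0, 1 - alpha), I_1 = [1 - alpha, 1).\<close>
definition rot :: "real \<Rightarrow> real \<Rightarrow> real" where
  "rot \<alpha> \<rho> = frac (\<rho> + \<alpha>)"

definition I0 :: "real \<Rightarrow> real set" where
  "I0 \<alpha> = {0..<1 - \<alpha>}"

definition sword :: "real \<Rightarrow> real \<Rightarrow> nat \<Rightarrow> nat" where
  "sword \<rho> \<alpha> n = (if (rot \<alpha> ^^ n) \<rho> \<in> I0 \<alpha> then 0 else 1)"

definition factors_slope :: "real \<Rightarrow> nat list set" where
  "factors_slope \<alpha> = {w. \<exists>\<rho>\<in>{0..<1}. \<exists>m. w = map (sword \<rho> \<alpha>) [m..<m + length w]}"

definition cyl :: "real \<Rightarrow> nat list \<Rightarrow> real set" where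
  "cyl \<alpha> w = {\<rho>\<in>{0..<1}. \<forall>i<length w. sword \<rho> \<alpha> i = w ! i}"

text \<open>I is an arc [a,b) of the circle [0,1) whose endpoints (as points of the circle,
  so b = 1 is identified with 0) are x and y.\<close>
definition arc_endpoints :: "real set \<Rightarrow> real \<Rightarrow> real \<Rightarrow> bool" where
  "arc_endpoints I x y \<longleftrightarrow>
     (\<exists>a b. 0 \<le> a \<and> a < b \<and> b \<le> 1 \<and> I = {a..<b} \<and> {a, frac b} = {x, y})"

definition singular_factor :: "real \<Rightarrow> nat \<Rightarrow> nat list \<Rightarrow> bool" where
  "singular_factor \<alpha> k s \<longleftrightarrow>
     s \<in> factors_slope \<alpha> \<and> length s = cf_q \<alpha> k \<and>
     arc_endpoints (cyl \<alpha> s) 0 (frac (- (real (cf_q \<alpha> k) * \<alpha>)))"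

definition parikh :: "nat list \<Rightarrow> nat \<times> nat" where
  "parikh u = (count_list u 0, count_list u 1)"

definition parikh_contained :: "nat \<times> nat \<Rightarrow> nat \<times> nat \<Rightarrow> bool" where
  "parikh_contained P Q \<longleftrightarrow> fst P \<le> fst Q \<and> snd P \<le> snd Q \<and> P \<noteq> Q"

end

theory Submission imports Defs begin

lemma rot_pow:
  assumes "\<rho> \<in> {0..<1}"
  shows "(rot \<alpha> ^^ i) \<rho> = frac (\<rho> + real i * \<alpha>)"
proof (induction i)
  case 0 then show ?case using assms by simp
next
  case (Suc i)
  have "frac (frac (\<rho> + real i * \<alpha>) + \<alpha>) = frac (\<rho> + real i * \<alpha> + \<alpha>)"
    by (metis add.commute diff_add_eq frac_def frac_add_of_int_right uminus_add_conv_diff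
        add_uminus_conv_diff of_int_minus)
  then show ?case using Suc by (simp add: rot_def algebra_simps)
qed

lemma letter_floor:
  fixes x \<alpha> :: real
  assumes "0 < \<alpha>" "\<alpha> < 1"
  shows "(frac x \<in> I0 \<alpha>) = (\<lfloor>x + \<alpha>\<rfloor> = \<lfloor>x\<rfloor>)"
    and "\<not> frac x \<in> I0 \<alpha> \<Longrightarrow> \<lfloor>x + \<alpha>\<rfloor> = \<lfloor>x\<rfloor> + 1"
proof -
  have fx: "x = of_int \<lfloor>x\<rfloor> + frac x" by (simp add: frac_def)
  show "(frac x \<in> I0 \<alpha>) = (\<lfloor>x + \<alpha>\<rfloor> = \<lfloor>x\<rfloor>)"
  proof
    assume "frac x \<in> I0 \<alpha>"
    then have "frac x < 1 - \<alpha>" by (simp add: I0_def)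
    then show "\<lfloor>x + \<alpha>\<rfloor> = \<lfloor>x\<rfloor>" using assms fx frac_ge_0[of x]
      by (intro floor_unique) linarith+
  next
    assume h: "\<lfloor>x + \<alpha>\<rfloor> = \<lfloor>x\<rfloor>"
    have "x + \<alpha> < of_int \<lfloor>x + \<alpha>\<rfloor> + 1" by linarith
    then show "frac x \<in> I0 \<alpha>" using h fx frac_ge_0[of x] by (simp add: I0_def)
  qed
  show "\<not> frac x \<in> I0 \<alpha> \<Longrightarrow> \<lfloor>x + \<alpha>\<rfloor> = \<lfloor>x\<rfloor> + 1"
    using assms fx frac_ge_0[of x] frac_lt_1[of x]
    by (intro floor_unique) (auto simp: I0_def)
qed

definition W :: "real \<Rightarrow> real \<Rightarrow> nat \<Rightarrow> int" where
  "W \<alpha> \<rho> i = \<lfloor>\<rho> + real i * \<alpha>\<rfloor>"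

lemma sword_W:
  assumes "0 < \<alpha>" "\<alpha> < 1" "\<rho> \<in> {0..<1}"
  shows "int (sword \<rho> \<alpha> i) = W \<alpha> \<rho> (Suc i) - W \<alpha> \<rho> i"
proof -
  have e: "\<rho> + real (Suc i) * \<alpha> = (\<rho> + real i * \<alpha>) + \<alpha>" by (simp add: algebra_simps)
  show ?thesis
    using letter_floor[OF assms(1,2), of "\<rho> + real i * \<alpha>"]
    unfolding sword_def rot_pow[OF assms(3)] W_def e by auto
qed

lemma sword01: "sword \<rho> \<alpha> i \<in> {0,1}" by (simp add: sword_def)

lemma sword_set: "set (map (sword \<rho> \<alpha>) xs) \<subseteq> {0,1}" by (auto simp: sword_def)

lemma sword_le1: "sword \<rho> \<alpha> i \<le> 1" by (simp add: sword_def)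

lemma count01: "set w \<subseteq> {0,1::nat} \<Longrightarrow> count_list w 0 + count_list w 1 = length w"
  by (induction w) auto

lemma count_ones:
  assumes "0 < \<alpha>" "\<alpha> < 1" "\<rho> \<in> {0..<1}"
  shows "int (count_list (map (sword \<rho> \<alpha>) [m..<m+n]) 1) = W \<alpha> \<rho> (m+n) - W \<alpha> \<rho> m"
proof (induction n)
  case 0 then show ?case by simp
next
  case (Suc n)
  have "int (sword \<rho> \<alpha> (m+n)) = W \<alpha> \<rho> (Suc (m+n)) - W \<alpha> \<rho> (m+n)"
    using sword_W[OF assms] .
  moreover have "sword \<rho> \<alpha> (m+n) \<le> 1" by (rule sword_le1)
  ultimately show ?case using Suc by (cases "sword \<rho> \<alpha> (m+n) = 1") auto
qed


lemma q_pos: "cf_a \<alpha> 1 \<ge> 2 \<Longrightarrow> cf_q \<alpha> k \<ge> 1"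
  by (induction \<alpha> k rule: cf_q.induct) auto

lemma nonint:
  assumes "\<alpha> \<notin> \<rat>" "j \<ge> 1"
  shows "real j * \<alpha> \<notin> \<int>"
proof
  assume "real j * \<alpha> \<in> \<int>"
  then obtain z where z: "real j * \<alpha> = of_int z" by (auto elim: Ints_cases)
  then have "\<alpha> = of_int z / real j" using assms(2) by (simp add: field_simps)
  then have "\<alpha> \<in> \<rat>" by simp
  with assms(1) show False by simp
qed

lemma avoid:
  assumes "\<rho> \<in> {0..<1}" "\<rho> + t \<in> \<int>"
  shows "\<rho> = frac (- t)"
proof -
  have "- t - \<rho> \<in> \<int>" using assms(2)
    by (metis Ints_minus minus_add_distrib uminus_add_conv_diff)
  then have "frac (- t) = \<rho>" using assms(1) by (simp add: frac_unique_iff)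
  then show ?thesis by simp
qed

lemma floor_int_minus:
  fixes z :: real
  assumes "z \<notin> \<int>"
  shows "\<lfloor>of_int K - z\<rfloor> = K - \<lfloor>z\<rfloor> - 1"
proof -
  have h1: "frac z > 0" using assms by simp
  have h2: "z = of_int \<lfloor>z\<rfloor> + frac z" by (simp add: frac_def)
  have h3: "frac z < 1" by (rule frac_lt_1)
  have "real_of_int (K - \<lfloor>z\<rfloor> - 1) \<le> of_int K - z"
    using h1 h2 h3 by (simp add: of_int_diff; linarith?)
  moreover have "of_int K - z < real_of_int (K - \<lfloor>z\<rfloor> - 1) + 1"
    using h1 h2 h3 by (simp add: of_int_diff; linarith?)
  ultimately show ?thesis by (intro floor_unique)
qed

lemma word_of:
  assumes "\<rho> \<in> cyl \<alpha> s"
  shows "s = map (sword \<rho> \<alpha>) [0..<length s]"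
  using assms by (intro nth_equalityI) (auto simp: cyl_def)

lemma contained:
  assumes "set p \<subseteq> {0,1}" "set f \<subseteq> {0,1}" "length p < length f"
    "int (count_list p 1) \<le> int (count_list f 1)"
    "int (length p) - int (count_list p 1) \<le> int (length f) - int (count_list f 1)"
  shows "parikh_contained (parikh p) (parikh f)"
  using count01[OF assms(1)] count01[OF assms(2)] assms(3-5)
  unfolding parikh_contained_def parikh_def by auto

lemma factor_ones:
  assumes "0 < \<alpha>" "\<alpha> < 1" "f \<in> factors_slope \<alpha>" "length f = n"
  shows "\<lfloor>real n * \<alpha>\<rfloor> \<le> int (count_list f 1) \<and> int (count_list f 1) \<le> \<lfloor>real n * \<alpha>\<rfloor> + 1
     \<and> set f \<subseteq> {0,1}"
proof -
  obtain \<rho> m where r: "\<rho> \<in> {0..<1}" and f: "f = map (sword \<rho> \<alpha>) [m..<m + n]"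
    using assms(3,4) unfolding factors_slope_def by auto
  have c: "int (count_list f 1) = W \<alpha> \<rho> (m+n) - W \<alpha> \<rho> m"
    using count_ones[OF assms(1,2) r] f by simp
  have e: "\<rho> + real (m+n) * \<alpha> = (\<rho> + real m * \<alpha>) + real n * \<alpha>" by (simp add: algebra_simps)
  have "set f \<subseteq> {0,1}" using f sword_set[of \<rho> \<alpha> "[m..<m + n]"] by simp
  then show ?thesis using c unfolding W_def e floor_add[of "\<rho> + real m * \<alpha>"] by auto
qed


theorem lemma2p5:
  fixes \<alpha> :: real and k :: nat and s :: "nat list"
  assumes "0 < \<alpha>" and "\<alpha> < 1" and "\<alpha> \<notin> \<rat>"
    and "cf_a \<alpha> 1 \<ge> 2"
    and "singular_factor \<alpha> k s"
  shows "hd s = last s \<and> rev s = s \<and>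
    (\<forall>p f. p \<noteq> [] \<and> strict_prefix p s \<and> f \<in> factors_slope \<alpha> \<and> length f = cf_q \<alpha> k
            \<longrightarrow> parikh_contained (parikh p) (parikh f)) \<and>
    (\<forall>p f. p \<noteq> [] \<and> strict_suffix p s \<and> f \<in> factors_slope \<alpha> \<and> length f = cf_q \<alpha> k
            \<longrightarrow> parikh_contained (parikh p) (parikh f))"
proof -
  define n where "n = cf_q \<alpha> k"
  define x where "x = real n * \<alpha>"
  define d where "d = frac x"
  define c where "c = frac (- x)"
  define J where "J = cyl \<alpha> s"
  have a0: "0 < \<alpha>" "\<alpha> < 1" using assms by auto
  have n1: "n \<ge> 1" unfolding n_def using q_pos[OF assms(4)] .
  have ls: "length s = n" and arc: "arc_endpoints J 0 c"
    using assms(5) unfolding singular_factor_def n_def J_def c_def x_def by auto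
  have xni: "x \<notin> \<int>" unfolding x_def using nonint[OF assms(3) n1] .
  have d01: "0 < d" "d < 1" unfolding d_def using xni frac_lt_1 by auto
  have cd: "c = 1 - d" unfolding c_def d_def using frac_neg[of x] xni by simp
  have xfl: "x = of_int \<lfloor>x\<rfloor> + d" unfolding d_def by (simp add: frac_def)
  have JJ: "J = {c..<1} \<or> J = {0..<c}"
  proof -
    obtain a b where ab: "0 \<le> a" "a < b" "b \<le> 1" "J = {a..<b}" "{a, frac b} = {0, c}"
      using arc unfolding arc_endpoints_def by blast
    show ?thesis
    proof (cases "a = 0")
      case True
      then have fb: "frac b = c" using ab(5) cd d01 by (auto simp: doubleton_eq_iff)
      have "b \<noteq> 1" using fb cd d01 by auto
      then have "frac b = b" using ab True by (simp add: frac_eq)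
      then show ?thesis using fb ab True by simp
    next
      case False
      then have "a = c" "frac b = 0" using ab(5) by (auto simp: doubleton_eq_iff)
      then have "b \<in> \<int>" by simp
      then obtain z where z: "b = of_int z" by (auto elim: Ints_cases)
      have "(0::real) < of_int z" "(of_int z::real) \<le> 1" using ab z by auto
      then have "0 < z" "z \<le> 1" by simp_all
      then have "b = 1" using z by (simp add: order_antisym)
      then show ?thesis using ab \<open>a = c\<close> by simp
    qed
  qed
  have Jsub: "J \<subseteq> {0..<1}" unfolding J_def cyl_def by auto
  have word: "\<And>\<rho>. \<rho> \<in> J \<Longrightarrow> s = map (sword \<rho> \<alpha>) [0..<n]"
    using word_of ls unfolding J_def by metis
  have onesJ: "\<And>\<rho> m. \<rho> \<in> J \<Longrightarrow> m \<le> n \<Longrightarrow> int (count_list (take m s) 1) = W \<alpha> \<rho> m"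
  proof -
    fix \<rho> m assume r: "\<rho> \<in> J" and m: "m \<le> n"
    have r1: "\<rho> \<in> {0..<1}" using r Jsub by auto
    have "take m s = map (sword \<rho> \<alpha>) [0..<0+m]" using word[OF r] m by (simp add: take_map)
    then have "int (count_list (take m s) 1) = W \<alpha> \<rho> (0+m) - W \<alpha> \<rho> 0"
      using count_ones[OF a0 r1, of 0 m] by simp
    moreover have "W \<alpha> \<rho> 0 = 0" using r1 by (simp add: W_def floor_eq_iff)
    ultimately show "int (count_list (take m s) 1) = W \<alpha> \<rho> m" by simp
  qed
  have sset: "set s \<subseteq> {0,1}"
  proof -
    have "c \<in> J \<or> 0 \<in> J" using JJ cd d01 by auto
    then obtain \<rho> where "\<rho> \<in> J" by blast
    then show ?thesis using word[of \<rho>] sword_set by metis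
  qed
  have pref: "int (count_list (take m s) 1) \<le> \<lfloor>x\<rfloor> \<and>
      int m - int (count_list (take m s) 1) \<le> int n - \<lfloor>x\<rfloor> - 1"
    if m1: "1 \<le> m" and mn: "m < n" for m
  proof -
    define y where "y = real m * \<alpha>"
    define e where "e = frac y"
    have yni: "y \<notin> \<int>" unfolding y_def using nonint[OF assms(3) m1] .
    have e01: "0 < e" "e < 1" unfolding e_def using yni frac_lt_1 by auto
    have yfl: "y = of_int \<lfloor>y\<rfloor> + e" unfolding e_def by (simp add: frac_def)
    have xy: "y < x" unfolding x_def y_def using mn a0 by simp
    have xy2: "x - y < real n - real m"
    proof -
      have "x - y = (real n - real m) * \<alpha>" unfolding x_def y_def by (simp add: algebra_simps)
      also have "\<dots> < (real n - real m) * 1" using mn a0 by (intro mult_strict_left_mono) auto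
      finally show ?thesis by simp
    qed
    have mle: "m \<le> n" using mn by simp
    show ?thesis
    proof (cases "J = {c..<1}")
      case True
      define r2 where "r2 = 1 - min d e"
      have cJ: "c \<in> J" using True cd d01 by auto
      have r2J: "r2 \<in> J" using True cd d01 e01 unfolding r2_def by auto
      have "W \<alpha> r2 m = \<lfloor>y\<rfloor> + 1" unfolding W_def r2_def y_def[symmetric]
        using yfl e01 d01 by (intro floor_unique) (auto simp: min_def)
      moreover have "W \<alpha> c m = W \<alpha> r2 m" using onesJ[OF cJ mle] onesJ[OF r2J mle] by simp
      ultimately have "\<lfloor>c + y\<rfloor> = \<lfloor>y\<rfloor> + 1" unfolding W_def y_def by simp
      then have "of_int \<lfloor>y\<rfloor> + 1 \<le> c + y" by (metis of_int_floor_le of_int_add of_int_1)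
      then have ed: "d \<le> e" using yfl cd by linarith
      have cnt: "int (count_list (take m s) 1) = \<lfloor>y\<rfloor> + 1"
        using onesJ[OF r2J mle] \<open>W \<alpha> r2 m = \<lfloor>y\<rfloor> + 1\<close> by simp
      have A: "of_int \<lfloor>y\<rfloor> < (of_int \<lfloor>x\<rfloor> :: real)" using yfl xfl ed xy by linarith
      have B: "of_int \<lfloor>x\<rfloor> - of_int \<lfloor>y\<rfloor> < (real n - real m + 1)" using yfl xfl xy2 e01 d01 by linarith
      have A': "\<lfloor>y\<rfloor> < \<lfloor>x\<rfloor>" using A by simp
      have B': "\<lfloor>x\<rfloor> - \<lfloor>y\<rfloor> < int n - int m + 1"
      proof -
        have "real_of_int (\<lfloor>x\<rfloor> - \<lfloor>y\<rfloor>) < real_of_int (int n - int m + 1)" using B by simp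
        then show ?thesis by (simp only: of_int_less_iff)
      qed
      show ?thesis using cnt A' B' by linarith
    next
      case False
      then have J0: "J = {0..<c}" using JJ by simp
      have zJ: "0 \<in> J" using J0 cd d01 by auto
      have cnt: "int (count_list (take m s) 1) = \<lfloor>y\<rfloor>"
        using onesJ[OF zJ mle] unfolding W_def y_def by simp
      have ed: "e \<le> d"
      proof (rule ccontr)
        assume "\<not> e \<le> d"
        define r2 where "r2 = c - (e - d) / 2"
        have r2J: "r2 \<in> J" using J0 cd d01 e01 \<open>\<not> e \<le> d\<close> unfolding r2_def by auto
        have "of_int \<lfloor>y\<rfloor> + 1 \<le> r2 + y" using yfl cd \<open>\<not> e \<le> d\<close> r2_def by (simp add: field_simps)
        then have "\<lfloor>y\<rfloor> + 1 \<le> \<lfloor>r2 + y\<rfloor>" by (metis le_floor_iff of_int_1 of_int_add)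
        moreover have "W \<alpha> r2 m = \<lfloor>y\<rfloor>" using onesJ[OF r2J mle] cnt by simp
        ultimately show False unfolding W_def y_def by simp
      qed
      have A': "\<lfloor>y\<rfloor> \<le> \<lfloor>x\<rfloor>" using xy by (simp add: floor_mono)
      have B: "of_int \<lfloor>x\<rfloor> - of_int \<lfloor>y\<rfloor> < (real n - real m)" using yfl xfl xy2 ed by linarith
      have B': "\<lfloor>x\<rfloor> - \<lfloor>y\<rfloor> < int n - int m"
      proof -
        have "real_of_int (\<lfloor>x\<rfloor> - \<lfloor>y\<rfloor>) < real_of_int (int n - int m)" using B by simp
        then show ?thesis by (simp only: of_int_less_iff)
      qed
      show ?thesis using cnt A' B' by linarith
    qed
  qed
  have prefix_part: "parikh_contained (parikh p) (parikh f)"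
    if "p \<noteq> []" "strict_prefix p s" "f \<in> factors_slope \<alpha>" "length f = n" for p f
  proof -
    define m where "m = length p"
    have pt: "p = take m s" using that(2) unfolding m_def
      by (auto simp: strict_prefix_def prefix_def)
    have mn: "m < n" using prefix_length_less[OF that(2)] ls m_def by simp
    have m1: "1 \<le> m" using that(1) m_def by (cases p) auto
    have fo: "\<lfloor>x\<rfloor> \<le> int (count_list f 1)" "int (count_list f 1) \<le> \<lfloor>x\<rfloor> + 1" "set f \<subseteq> {0,1}"
      using factor_ones[OF a0 that(3,4)] unfolding x_def by auto
    have "set p \<subseteq> {0,1}" using pt sset by (meson in_set_takeD subset_iff)
    moreover have P: "int (count_list p 1) \<le> \<lfloor>x\<rfloor> \<and>
        int m - int (count_list p 1) \<le> int n - \<lfloor>x\<rfloor> - 1"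
      using pref[OF m1 mn] by (simp only: pt[symmetric])
    moreover have "length p < length f" using mn that(4) m_def by simp
    moreover have "int (count_list p 1) \<le> int (count_list f 1)" using P fo by linarith
    moreover have "int (length p) - int (count_list p 1) \<le> int (length f) - int (count_list f 1)"
      using P fo that(4) m_def by linarith
    ultimately show ?thesis using contained[of p f] fo(3) by blast
  qed
  have pal: "rev s = s"
  proof -
    define S where "S = (\<lambda>j. frac (- (real j * \<alpha>))) ` {0..n}"
    have "infinite J"
    proof (cases "J = {c..<1}")
      case True
      have "c < 1" using cd d01 by simp
      then show ?thesis using True infinite_Ico by metis
    next
      case False
      then have "J = {0..<c}" using JJ by simp
      moreover have "0 < c" using cd d01 by simp
      ultimately show ?thesis using infinite_Ico by metis
    qed
    moreover have "finite S" unfolding S_def by simp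
    ultimately obtain \<rho> where rJ: "\<rho> \<in> J" and rS: "\<rho> \<notin> S"
      by (metis finite_subset subsetI)
    have r1: "\<rho> \<in> {0..<1}" using rJ Jsub by auto
    have noint: "\<rho> + real j * \<alpha> \<notin> \<int>" if "j \<le> n" for j
      using avoid[OF r1, of "real j * \<alpha>"] rS that unfolding S_def by auto
    have cS: "c \<in> S" unfolding S_def c_def x_def by auto
    define r' where "r' = frac (- x - \<rho>)"
    have r'J: "r' \<in> J"
    proof (cases "J = {c..<1}")
      case True
      have "\<rho> \<noteq> c" using rS cS by auto
      then have rc: "c < \<rho>" "\<rho> < 1" using rJ True by auto
      have "- x - \<rho> - (c - \<rho> + 1) \<in> \<int>"
      proof -
        have "- x - \<rho> - (c - \<rho> + 1) = of_int (\<lfloor>- x\<rfloor> - 1)" unfolding c_def by (simp add: frac_def)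
        then show ?thesis by (metis Ints_of_int)
      qed
      then have "r' = c - \<rho> + 1" unfolding r'_def using rc cd d01 by (subst frac_unique_iff) auto
      then show ?thesis using True rc by auto
    next
      case False
      then have J0: "J = {0..<c}" using JJ by simp
      have "\<rho> \<noteq> 0" using rS unfolding S_def by force
      then have rc: "0 < \<rho>" "\<rho> < c" using rJ J0 by auto
      have "- x - \<rho> - (c - \<rho>) \<in> \<int>"
      proof -
        have "- x - \<rho> - (c - \<rho>) = of_int (\<lfloor>- x\<rfloor>)" unfolding c_def by (simp add: frac_def)
        then show ?thesis by (metis Ints_of_int)
      qed
      then have "r' = c - \<rho>" unfolding r'_def using rc cd d01 by (subst frac_unique_iff) auto
      then show ?thesis using J0 rc by auto
    qed
    define K where "K = - \<lfloor>- x - \<rho>\<rfloor>"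
    have r'K: "r' + real j * \<alpha> = of_int K - (\<rho> + real (n - j) * \<alpha>)" if "j \<le> n" for j
      using that unfolding r'_def K_def frac_def x_def by (simp add: of_nat_diff algebra_simps)
    have Wr': "W \<alpha> r' j = K - W \<alpha> \<rho> (n - j) - 1" if "j \<le> n" for j
      unfolding W_def r'K[OF that] using floor_int_minus noint by simp
    have r'1: "r' \<in> {0..<1}" using r'J Jsub by auto
    show ?thesis
    proof (rule nth_equalityI)
      show "length (rev s) = length s" by simp
      fix i assume "i < length (rev s)"
      then have i: "i < n" using ls by simp
      have "rev s ! i = s ! (n - 1 - i)" using i ls by (simp add: rev_nth)
      also have "\<dots> = sword r' \<alpha> (n - 1 - i)" using word[OF r'J] i by simp
      finally have e1: "int (rev s ! i) = W \<alpha> r' (Suc (n - 1 - i)) - W \<alpha> r' (n - 1 - i)"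
        using sword_W[OF a0 r'1] by simp
      have e2: "int (s ! i) = W \<alpha> \<rho> (Suc i) - W \<alpha> \<rho> i"
        using word[OF rJ] i sword_W[OF a0 r1] by simp
      have "Suc (n - 1 - i) = n - i" "n - (n - i) = i" "n - (n - 1 - i) = Suc i" using i by auto
      then have "int (rev s ! i) = int (s ! i)" using e1 e2 Wr'[of "n - i"] Wr'[of "n - 1 - i"] by simp
      then show "rev s ! i = s ! i" by simp
    qed
  qed
  have sne: "s \<noteq> []" using ls n1 by auto
  have hl: "hd s = last s" using pal sne by (metis hd_rev)
  have suffix_part: "parikh_contained (parikh p) (parikh f)"
    if "p \<noteq> []" "strict_suffix p s" "f \<in> factors_slope \<alpha>" "length f = n" for p f
  proof -
    have "strict_prefix (rev p) s" using that(2) pal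
      by (metis strict_suffix_to_prefix)
    then have "parikh_contained (parikh (rev p)) (parikh f)"
      using prefix_part[of "rev p" f] that by simp
    then show ?thesis by (simp add: parikh_def)
  qed
  show ?thesis using hl pal prefix_part suffix_part unfolding n_def by blast
qed

end
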